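(* Let $E(\Gamma)$ denote a random variable with the stationary distribution $\pi_\Gamma$ of the chain $\{E_k(\Gamma)\}$. Then (i) $E(\Gamma)\le_{st}E(\Gamma+1)$ for every $\Gamma>0$, and, with $E_0(\Gamma)=0$, $E_k(\Gamma)\le_{st}E_k(\Gamma+1)$ for every $k$; (ii) for every $x\ge 0$, $\lim_{\Gamma\to\infty}P(E(\Gamma)\ge x)=1$; (iii) consequently, if $E\sim\pi_\Gamma$, $Y\sim Y_1$ and $X'\sim\mathcal N(0,\mathbb E[Y]-\epsilon)$ are independent, then $\lim_{\Gamma\to\infty}P\big(\sqrt{E+Y}\ge |X'|\big)=1$.
   Context: $\{Y_k\}$ is an i.i.d. sequence of nonnegative random variables with $\mathbb E[Y_k^2]<\infty$; $\{X'_k\}$ is i.i.d. $\mathcal N(0,\mathbb E[Y]-\epsilon)$ independent of $\{Y_k\}$, with $0<\epsilon<\mathbb E[Y]$; $\eta_k=Y_k-X_k'^2$. For $\Gamma>0$ the buffer chain is $E_{k+1}(\Gamma)=\min\{\Gamma,\max\{0,E_k(\Gamma)+\eta_{k+1}\}\}$, which has a unique stationary distribution $\pi_\Gamma$. For real random variables, $A\le_{st}B$ means $P(A>x)\le P(B>x)$ for all $x$. *)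

theory Defs
  imports "HOL-Probability.Probability"
begin

definition buffer_step :: "real \<Rightarrow> real \<Rightarrow> real \<Rightarrow> real" where
  "buffer_step \<Gamma> e x = min \<Gamma> (max 0 (e + x))"

text \<open>The chain started at E_0 = 0, driven by the increments eta k (eta 0 unused).\<close>
fun buffer_chain :: "real \<Rightarrow> (nat \<Rightarrow> 'a \<Rightarrow> real) \<Rightarrow> nat \<Rightarrow> 'a \<Rightarrow> real" where
  "buffer_chain \<Gamma> \<eta> 0 \<omega> = 0"
| "buffer_chain \<Gamma> \<eta> (Suc k) \<omega> = buffer_step \<Gamma> (buffer_chain \<Gamma> \<eta> k \<omega>) (\<eta> (Suc k) \<omega>)"

definition stationary_buffer :: "real measure \<Rightarrow> real \<Rightarrow> real measure \<Rightarrow> bool" where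
  "stationary_buffer \<nu> \<Gamma> \<pi> \<longleftrightarrow>
     prob_space \<pi> \<and> sets \<pi> = sets borel \<and>
     distr (\<pi> \<Otimes>\<^sub>M \<nu>) borel (\<lambda>(e, x). buffer_step \<Gamma> e x) = \<pi>"

definition st_le :: "real measure \<Rightarrow> real measure \<Rightarrow> bool" where
  "st_le \<mu> \<nu> \<longleftrightarrow> (\<forall>x. measure \<mu> {y. y > x} \<le> measure \<nu> {y. y > x})"

end

theory Submission imports Defs begin

lemma buffer_step_measurable[measurable]:
  "(\<lambda>(e,x). buffer_step \<Gamma> e x) \<in> borel_measurable (borel \<Otimes>\<^sub>M borel)"
  unfolding buffer_step_def by measurable

lemma buffer_step_range: "0 \<le> \<Gamma> \<Longrightarrow> 0 \<le> buffer_step \<Gamma> e x \<and> buffer_step \<Gamma> e x \<le> \<Gamma>"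
  unfolding buffer_step_def by auto

lemma buffer_step_mono: "e \<le> e' \<Longrightarrow> \<Gamma> \<le> \<Gamma>' \<Longrightarrow> buffer_step \<Gamma> e x \<le> buffer_step \<Gamma>' e' x"
  unfolding buffer_step_def by auto

lemma stat_facts:
  assumes st: "stationary_buffer \<nu> \<Gamma> \<pi>" and nu: "prob_space \<nu>" "sets \<nu> = sets borel"
    and G: "0 \<le> \<Gamma>"
  shows "prob_space \<pi>" "sets \<pi> = sets borel"
    "AE e in \<pi>. 0 \<le> e \<and> e \<le> \<Gamma>"
    "\<And>(h::real\<Rightarrow>real) B. h \<in> borel_measurable borel \<Longrightarrow> (\<And>x. \<bar>h x\<bar> \<le> B) \<Longrightarrow>
        (\<integral>e. h e \<partial>\<pi>) = (\<integral>e. (\<integral>x. h (buffer_step \<Gamma> e x) \<partial>\<nu>) \<partial>\<pi>)"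
proof -
  show pp: "prob_space \<pi>" and sp: "sets \<pi> = sets borel" using st unfolding stationary_buffer_def by auto
  have eq: "distr (\<pi> \<Otimes>\<^sub>M \<nu>) borel (\<lambda>(e, x). buffer_step \<Gamma> e x) = \<pi>"
    using st unfolding stationary_buffer_def by auto
  have ms: "(\<lambda>(e,x). buffer_step \<Gamma> e x) \<in> borel_measurable (\<pi> \<Otimes>\<^sub>M \<nu>)"
    using buffer_step_measurable[of \<Gamma>]
    by (simp add: measurable_cong_sets[OF sets_pair_measure_cong[OF sp nu(2)] refl])
  interpret P: prob_space \<pi> by fact
  interpret N: prob_space \<nu> by fact
  interpret PN: pair_prob_space \<pi> \<nu> ..
  have "AE e in distr (\<pi> \<Otimes>\<^sub>M \<nu>) borel (\<lambda>(e, x). buffer_step \<Gamma> e x). 0 \<le> e \<and> e \<le> \<Gamma>"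
    by (subst AE_distr_iff[OF ms]) (auto simp: buffer_step_range[OF G])
  then show "AE e in \<pi>. 0 \<le> e \<and> e \<le> \<Gamma>" by (simp only: eq)
  fix h :: "real \<Rightarrow> real" and B
  assume hm: "h \<in> borel_measurable borel" and hb: "\<And>x. \<bar>h x\<bar> \<le> B"
  have hm2: "(\<lambda>z. h (case z of (e,x) \<Rightarrow> buffer_step \<Gamma> e x)) \<in> borel_measurable (\<pi> \<Otimes>\<^sub>M \<nu>)"
    using measurable_comp[OF ms hm] by (simp add: comp_def)
  have "(\<integral>e. h e \<partial>\<pi>) = (\<integral>e. h e \<partial>distr (\<pi> \<Otimes>\<^sub>M \<nu>) borel (\<lambda>(e, x). buffer_step \<Gamma> e x))"
    by (simp add: eq)
  also have "\<dots> = (\<integral>z. h (case z of (e,x) \<Rightarrow> buffer_step \<Gamma> e x) \<partial>(\<pi> \<Otimes>\<^sub>M \<nu>))"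
    by (rule integral_distr[OF ms hm])
  also have "\<dots> = (\<integral>e. (\<integral>x. h (buffer_step \<Gamma> e x) \<partial>\<nu>) \<partial>\<pi>)"
  proof (subst PN.integral_fst'[symmetric])
    show "integrable (\<pi> \<Otimes>\<^sub>M \<nu>) (\<lambda>z. h (case z of (e,x) \<Rightarrow> buffer_step \<Gamma> e x))"
      by (rule PN.integrable_const_bound[where B=B]) (use hb hm2 in auto)
  qed simp
  finally show "(\<integral>e. h e \<partial>\<pi>) = (\<integral>e. (\<integral>x. h (buffer_step \<Gamma> e x) \<partial>\<nu>) \<partial>\<pi>)" by simp
qed

definition Top :: "real measure \<Rightarrow> real \<Rightarrow> (real \<Rightarrow> real) \<Rightarrow> real \<Rightarrow> real" where
  "Top \<nu> \<Gamma> h e = (\<integral>x. h (buffer_step \<Gamma> e x) \<partial>\<nu>)"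

definition good :: "(real \<Rightarrow> real) \<Rightarrow> bool" where
  "good h \<longleftrightarrow> mono h \<and> (\<forall>x. 0 \<le> h x \<and> h x \<le> 1)"

lemma step_meas_x[measurable]:
  assumes "sets \<nu> = sets borel"
  shows "(\<lambda>x. buffer_step \<Gamma> e x) \<in> borel_measurable \<nu>"
  unfolding buffer_step_def measurable_cong_sets[OF assms refl] by measurable

lemma good_integrable:
  assumes nu: "prob_space \<nu>" "sets \<nu> = sets borel" and g: "good h"
  shows "integrable \<nu> (\<lambda>x. h (buffer_step \<Gamma> e x))"
proof -
  interpret N: prob_space \<nu> by fact
  have hm: "h \<in> borel_measurable borel" using g borel_measurable_mono unfolding good_def by blast
  show ?thesis
    by (rule N.integrable_const_bound[where B=1])
       (use g in \<open>auto simp: good_def intro!: measurable_comp[OF step_meas_x[OF nu(2)] hm, unfolded comp_def]\<close>)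
qed

lemma Top_good:
  assumes nu: "prob_space \<nu>" "sets \<nu> = sets borel" and g: "good h"
  shows "good (Top \<nu> \<Gamma> h)"
proof -
  interpret N: prob_space \<nu> by fact
  have mono: "mono (Top \<nu> \<Gamma> h)"
  proof (rule monoI)
    fix a b :: real assume "a \<le> b"
    then show "Top \<nu> \<Gamma> h a \<le> Top \<nu> \<Gamma> h b"
      unfolding Top_def
      by (intro integral_mono good_integrable[OF nu g]) (use g in \<open>auto simp: good_def mono_def buffer_step_mono\<close>)
  qed
  have "0 \<le> Top \<nu> \<Gamma> h e \<and> Top \<nu> \<Gamma> h e \<le> 1" for e
  proof
    show "0 \<le> Top \<nu> \<Gamma> h e" unfolding Top_def using g by (auto simp: good_def intro!: integral_nonneg_AE)
    have "Top \<nu> \<Gamma> h e \<le> (\<integral>x. 1 \<partial>\<nu>)" unfolding Top_def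
      by (intro integral_mono good_integrable[OF nu g]) (use g in \<open>auto simp: good_def\<close>)
    then show "Top \<nu> \<Gamma> h e \<le> 1" by (simp add: N.prob_space)
  qed
  then show ?thesis using mono by (simp add: good_def)
qed

lemma Top_osc:
  assumes nu: "prob_space \<nu>" "sets \<nu> = sets borel" and g: "good h" and G: "0 < \<Gamma>"
  shows "Top \<nu> \<Gamma> h \<Gamma> - Top \<nu> \<Gamma> h 0 \<le> (1 - measure \<nu> {x. x \<le> -\<Gamma>}) * (h \<Gamma> - h 0)"
proof -
  interpret N: prob_space \<nu> by fact
  have sets: "{x. -\<Gamma> < x} \<in> sets \<nu>" "{x. x \<le> -\<Gamma>} \<in> sets \<nu>" using nu(2) by auto
  have "Top \<nu> \<Gamma> h \<Gamma> - Top \<nu> \<Gamma> h 0 = (\<integral>x. h (buffer_step \<Gamma> \<Gamma> x) - h (buffer_step \<Gamma> 0 x) \<partial>\<nu>)"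
    unfolding Top_def by (rule Bochner_Integration.integral_diff[symmetric]; rule good_integrable[OF nu g])
  also have "\<dots> \<le> (\<integral>x. (h \<Gamma> - h 0) * indicator {x. -\<Gamma> < x} x \<partial>\<nu>)"
  proof (intro integral_mono)
    show "integrable \<nu> (\<lambda>x. h (buffer_step \<Gamma> \<Gamma> x) - h (buffer_step \<Gamma> 0 x))"
      by (intro Bochner_Integration.integrable_diff good_integrable[OF nu g])
    show "integrable \<nu> (\<lambda>x. (h \<Gamma> - h 0) * indicator {x. -\<Gamma> < x} x)"
      using sets by (intro integrable_mult_right integrable_real_indicator) (auto simp: N.emeasure_eq_measure)
    fix x
    show "h (buffer_step \<Gamma> \<Gamma> x) - h (buffer_step \<Gamma> 0 x) \<le> (h \<Gamma> - h 0) * indicator {x. -\<Gamma> < x} x"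
    proof (cases "x \<le> -\<Gamma>")
      case True
      then have "buffer_step \<Gamma> \<Gamma> x = 0" "buffer_step \<Gamma> 0 x = 0" using G unfolding buffer_step_def by auto
      then show ?thesis using True by (simp add: indicator_def)
    next
      case False
      have "h (buffer_step \<Gamma> \<Gamma> x) \<le> h \<Gamma>" "h 0 \<le> h (buffer_step \<Gamma> 0 x)"
        using g buffer_step_range[of \<Gamma> \<Gamma> x] buffer_step_range[of \<Gamma> 0 x] G
        unfolding good_def mono_def by auto
      then show ?thesis using False by (simp add: indicator_def)
    qed
  qed
  also have "\<dots> = (h \<Gamma> - h 0) * measure \<nu> {x. -\<Gamma> < x}"
    using sets by simp
  also have "measure \<nu> {x. -\<Gamma> < x} = 1 - measure \<nu> {x. x \<le> -\<Gamma>}"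
  proof -
    have "{x. -\<Gamma> < x} = space \<nu> - {x. x \<le> -\<Gamma>}" using nu(2) sets_eq_imp_space_eq[OF nu(2)] by auto
    then show ?thesis using N.prob_compl[OF sets(2)] by simp
  qed
  finally show ?thesis by (simp add: mult.commute)
qed

lemma Top_cmp:
  assumes nu: "prob_space \<nu>" "sets \<nu> = sets borel" and g: "good h" "good h'"
    and le: "\<And>e. h e \<le> h' e" and G: "\<Gamma> \<le> \<Gamma>'"
  shows "Top \<nu> \<Gamma> h e \<le> Top \<nu> \<Gamma>' h' e"
  unfolding Top_def
proof (intro integral_mono good_integrable[OF nu])
  fix x
  have "h (buffer_step \<Gamma> e x) \<le> h (buffer_step \<Gamma>' e x)"
    using g(1) buffer_step_mono[OF order_refl G] unfolding good_def mono_def by blast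
  also have "\<dots> \<le> h' (buffer_step \<Gamma>' e x)" by (rule le)
  finally show "h (buffer_step \<Gamma> e x) \<le> h' (buffer_step \<Gamma>' e x)" .
qed (use g in auto)

lemma good_iter: "prob_space \<nu> \<Longrightarrow> sets \<nu> = sets borel \<Longrightarrow> good g \<Longrightarrow> good ((Top \<nu> \<Gamma> ^^ k) g)"
  by (induction k) (auto intro: Top_good)

lemma good_meas: "good h \<Longrightarrow> h \<in> borel_measurable borel"
  using borel_measurable_mono unfolding good_def by blast

lemma osc_iter:
  assumes nu: "prob_space \<nu>" "sets \<nu> = sets borel" and g: "good g" and G: "0 < \<Gamma>"
  shows "(Top \<nu> \<Gamma> ^^ k) g \<Gamma> - (Top \<nu> \<Gamma> ^^ k) g 0 \<le> (1 - measure \<nu> {x. x \<le> -\<Gamma>}) ^ k"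
proof (induction k)
  case 0 then show ?case using g by (simp add: good_def) (smt (verit))
next
  case (Suc k)
  interpret N: prob_space \<nu> by fact
  have p1: "0 \<le> 1 - measure \<nu> {x. x \<le> -\<Gamma>}" by (simp add: N.prob_le_1)
  have "(Top \<nu> \<Gamma> ^^ Suc k) g \<Gamma> - (Top \<nu> \<Gamma> ^^ Suc k) g 0
      \<le> (1 - measure \<nu> {x. x \<le> -\<Gamma>}) * ((Top \<nu> \<Gamma> ^^ k) g \<Gamma> - (Top \<nu> \<Gamma> ^^ k) g 0)"
    using Top_osc[OF nu good_iter[OF nu g] G, of k] by simp
  also have "\<dots> \<le> (1 - measure \<nu> {x. x \<le> -\<Gamma>}) * (1 - measure \<nu> {x. x \<le> -\<Gamma>}) ^ k"
    by (rule mult_left_mono[OF Suc p1])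
  finally show ?case by simp
qed

lemma cmp_iter:
  assumes nu: "prob_space \<nu>" "sets \<nu> = sets borel" and g: "good g" and G: "\<Gamma> \<le> \<Gamma>'"
  shows "(Top \<nu> \<Gamma> ^^ k) g e \<le> (Top \<nu> \<Gamma>' ^^ k) g e"
proof (induction k arbitrary: e)
  case (Suc k)
  show ?case using Top_cmp[OF nu good_iter[OF nu g] good_iter[OF nu g] Suc G] by simp
qed simp

lemma stat_iter:
  assumes st: "stationary_buffer \<nu> \<Gamma> \<pi>" and nu: "prob_space \<nu>" "sets \<nu> = sets borel"
    and G: "0 \<le> \<Gamma>" and g: "good g"
  shows "(\<integral>e. g e \<partial>\<pi>) = (\<integral>e. (Top \<nu> \<Gamma> ^^ k) g e \<partial>\<pi>)"
proof (induction k)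
  case (Suc k)
  have gk: "good ((Top \<nu> \<Gamma> ^^ k) g)" by (rule good_iter[OF nu g])
  have "(\<integral>e. (Top \<nu> \<Gamma> ^^ k) g e \<partial>\<pi>) = (\<integral>e. Top \<nu> \<Gamma> ((Top \<nu> \<Gamma> ^^ k) g) e \<partial>\<pi>)"
    unfolding Top_def[of \<nu> \<Gamma> "(Top \<nu> \<Gamma> ^^ k) g"]
    by (rule stat_facts(4)[OF st nu G good_meas[OF gk], where B=1]) (use gk in \<open>auto simp: good_def\<close>)
  then show ?case using Suc by simp
qed simp

lemma part1_abstract:
  assumes nu: "prob_space \<nu>" "sets \<nu> = sets borel" and p: "0 < measure \<nu> {x. x \<le> -\<Gamma>}"
    and G: "0 < \<Gamma>" and st1: "stationary_buffer \<nu> \<Gamma> \<pi>" and st2: "stationary_buffer \<nu> (\<Gamma>+1) \<pi>'"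
  shows "st_le \<pi> \<pi>'"
  unfolding st_le_def
proof
  fix x :: real
  define g :: "real \<Rightarrow> real" where "g = indicator {y. x < y}"
  have g: "good g" unfolding good_def g_def mono_def by (auto simp: indicator_def)
  interpret P1: prob_space \<pi> using stat_facts[OF st1 nu] G by auto
  interpret P2: prob_space \<pi>' using stat_facts[OF st2 nu] G by auto
  interpret N: prob_space \<nu> by fact
  have s1: "sets \<pi> = sets borel" and s2: "sets \<pi>' = sets borel" using stat_facts[OF st1 nu] stat_facts[OF st2 nu] G by auto
  have supp1: "AE e in \<pi>. 0 \<le> e \<and> e \<le> \<Gamma>" and supp2: "AE e in \<pi>'. 0 \<le> e \<and> e \<le> \<Gamma>+1"
    using stat_facts[OF st1 nu] stat_facts[OF st2 nu] G by auto
  have m1: "measure \<pi> {y. y > x} = (\<integral>e. g e \<partial>\<pi>)"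
    using s1 unfolding g_def by simp
  have m2: "measure \<pi>' {y. y > x} = (\<integral>e. g e \<partial>\<pi>')"
    using s2 unfolding g_def by simp
  let ?q = "1 - measure \<nu> {x. x \<le> -\<Gamma>}"
  have q: "0 \<le> ?q" "?q < 1" using p N.prob_le_1 by auto
  have key: "measure \<pi> {y. y > x} \<le> measure \<pi>' {y. y > x} + ?q ^ k" for k
  proof -
    let ?T = "(Top \<nu> \<Gamma> ^^ k) g" and ?T' = "(Top \<nu> (\<Gamma>+1) ^^ k) g"
    have gT: "good ?T" and gT': "good ?T'" using good_iter[OF nu g] by auto
    have "measure \<pi> {y. y > x} = (\<integral>e. ?T e \<partial>\<pi>)" using m1 stat_iter[OF st1 nu _ g] G by simp
    also have "\<dots> \<le> (\<integral>e. ?T \<Gamma> \<partial>\<pi>)"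
    proof (rule integral_mono_AE)
      show "integrable \<pi> ?T"
        by (rule P1.integrable_const_bound[where B=1])
           (use gT good_meas[OF gT] s1 in \<open>auto simp: good_def measurable_cong_sets[OF s1 refl]\<close>)
      show "AE e in \<pi>. ?T e \<le> ?T \<Gamma>" using supp1 gT by (auto simp: good_def mono_def)
    qed simp
    also have "\<dots> = ?T \<Gamma>" by (simp add: P1.prob_space)
    also have "\<dots> \<le> ?T 0 + ?q ^ k" using osc_iter[OF nu g G, of k] by simp
    also have "?T 0 \<le> ?T' 0" by (rule cmp_iter[OF nu g]) simp
    also have "?T' 0 = (\<integral>e. ?T' 0 \<partial>\<pi>')" by (simp add: P2.prob_space)
    also have "\<dots> \<le> (\<integral>e. ?T' e \<partial>\<pi>')"
    proof (rule integral_mono_AE)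
      show "integrable \<pi>' ?T'"
        by (rule P2.integrable_const_bound[where B=1])
           (use gT' good_meas[OF gT'] s2 in \<open>auto simp: good_def measurable_cong_sets[OF s2 refl]\<close>)
      show "AE e in \<pi>'. ?T' 0 \<le> ?T' e" using supp2 gT' by (auto simp: good_def mono_def)
    qed simp
    also have "\<dots> = measure \<pi>' {y. y > x}" using m2 stat_iter[OF st2 nu _ g] G by simp
    finally show ?thesis by simp
  qed
  show "measure \<pi> {y. y > x} \<le> measure \<pi>' {y. y > x}"
  proof (rule ccontr)
    assume "\<not> ?thesis"
    then have d: "0 < measure \<pi> {y. y > x} - measure \<pi>' {y. y > x}" by simp
    have "\<exists>k. ?q ^ k < measure \<pi> {y. y > x} - measure \<pi>' {y. y > x}"
    proof (cases "?q = 0")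
      case True then show ?thesis using d by (intro exI[of _ 1]) simp
    next
      case False then show ?thesis using q real_arch_pow_inv[OF d] by simp
    qed
    then obtain k where "?q ^ k < measure \<pi> {y. y > x} - measure \<pi>' {y. y > x}" ..
    then show False using key[of k] by simp
  qed
qed

lemma clip_sq_le:
  assumes "0 \<le> e" "e \<le> \<Gamma>"
  shows "(\<Gamma> - buffer_step \<Gamma> e x)\<^sup>2 \<le> ((\<Gamma> - e) - x)\<^sup>2"
proof -
  have "0 \<le> \<Gamma> - buffer_step \<Gamma> e x \<and> \<Gamma> - buffer_step \<Gamma> e x \<le> \<bar>(\<Gamma> - e) - x\<bar>"
    using assms unfolding buffer_step_def by auto
  then have "(\<Gamma> - buffer_step \<Gamma> e x)\<^sup>2 \<le> (\<bar>(\<Gamma> - e) - x\<bar>)\<^sup>2"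
    by (intro power_mono) auto
  then show ?thesis by simp
qed

lemma part3_abstract:
  assumes nu: "prob_space \<nu>" "sets \<nu> = sets borel"
    and int2: "integrable \<nu> (\<lambda>x. x\<^sup>2)" and mean: "(\<integral>x. x \<partial>\<nu>) = \<epsilon>"
    and st: "stationary_buffer \<nu> \<Gamma> \<pi>" and G: "0 < \<Gamma>"
  shows "(\<integral>e. \<Gamma> - min \<Gamma> (max 0 e) \<partial>\<pi>) * (2 * \<epsilon>) \<le> (\<integral>x. x\<^sup>2 \<partial>\<nu>)"
proof -
  interpret N: prob_space \<nu> by fact
  have s1: "sets \<pi> = sets borel" and supp: "AE e in \<pi>. 0 \<le> e \<and> e \<le> \<Gamma>"
    using stat_facts[OF st nu] G by auto
  interpret P: prob_space \<pi> using stat_facts[OF st nu] G by auto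
  interpret PN: pair_prob_space \<pi> \<nu> ..
  have idm: "(\<lambda>x. x) \<in> borel_measurable \<nu>" using nu(2) by (simp add: measurable_cong_sets[OF nu(2) refl])
  have int1: "integrable \<nu> (\<lambda>x. x)" by (rule N.square_integrable_imp_integrable[OF idm int2])
  define c where "c e = min \<Gamma> (max 0 e)" for e
  define f where "f e = (\<Gamma> - c e)\<^sup>2" for e
  let ?m2 = "\<integral>x. x\<^sup>2 \<partial>\<nu>"
  have cm[measurable]: "c \<in> borel_measurable borel" unfolding c_def by measurable
  have fm[measurable]: "f \<in> borel_measurable borel" unfolding f_def by measurable
  have cr: "0 \<le> c e \<and> c e \<le> \<Gamma>" for e using G unfolding c_def by auto
  have fb: "\<bar>f e\<bar> \<le> \<Gamma>\<^sup>2" for e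
    using cr[of e] unfolding f_def by (auto intro!: power_mono)
  have stf: "(\<integral>e. f e \<partial>\<pi>) = (\<integral>e. (\<integral>x. f (buffer_step \<Gamma> e x) \<partial>\<nu>) \<partial>\<pi>)"
    by (rule stat_facts(4)[OF st nu _ fm fb]) (use G in auto)
  have cstep: "c (buffer_step \<Gamma> e x) = buffer_step \<Gamma> e x" for e x
    using buffer_step_range[of \<Gamma> e x] G unfolding c_def by auto
  have intsq: "integrable \<nu> (\<lambda>x. ((\<Gamma> - e) - x)\<^sup>2)" for e
  proof -
    have "(\<lambda>x. ((\<Gamma> - e) - x)\<^sup>2) = (\<lambda>x. (\<Gamma> - e)\<^sup>2 - 2 * (\<Gamma> - e) * x + x\<^sup>2)"
      by (auto simp: power2_eq_square algebra_simps)
    then show ?thesis using int1 int2 by simp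
  qed
  have fstep_m: "(\<lambda>x. f (buffer_step \<Gamma> e x)) \<in> borel_measurable \<nu>" for e
    using measurable_comp[OF step_meas_x[OF nu(2)] fm] by (simp add: comp_def)
  have intf: "integrable \<nu> (\<lambda>x. f (buffer_step \<Gamma> e x))" for e
    by (rule N.integrable_const_bound[where B="\<Gamma>\<^sup>2"]) (use fb fstep_m in auto)
  have bound: "(\<integral>x. f (buffer_step \<Gamma> e x) \<partial>\<nu>) \<le> f e - 2 * \<epsilon> * (\<Gamma> - c e) + ?m2"
    if e: "0 \<le> e" "e \<le> \<Gamma>" for e
  proof -
    have ce: "c e = e" using e unfolding c_def by auto
    have "(\<integral>x. f (buffer_step \<Gamma> e x) \<partial>\<nu>) \<le> (\<integral>x. ((\<Gamma> - e) - x)\<^sup>2 \<partial>\<nu>)"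
      by (intro integral_mono intf intsq) (simp add: f_def cstep clip_sq_le[OF e])
    also have "(\<integral>x. ((\<Gamma> - e) - x)\<^sup>2 \<partial>\<nu>) = (\<integral>x. (\<Gamma> - e)\<^sup>2 - 2 * (\<Gamma> - e) * x + x\<^sup>2 \<partial>\<nu>)"
      by (rule Bochner_Integration.integral_cong) (auto simp: power2_eq_square algebra_simps)
    also have "\<dots> = (\<Gamma> - e)\<^sup>2 - 2 * (\<Gamma> - e) * \<epsilon> + ?m2"
      using int1 int2 mean by (simp add: N.prob_space)
    finally show ?thesis by (simp add: f_def ce algebra_simps)
  qed
  have Tm: "(\<lambda>e. \<integral>x. f (buffer_step \<Gamma> e x) \<partial>\<nu>) \<in> borel_measurable \<pi>"
  proof (rule N.borel_measurable_lebesgue_integral)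
    have "(\<lambda>(e,x). buffer_step \<Gamma> e x) \<in> borel_measurable (\<pi> \<Otimes>\<^sub>M \<nu>)"
      using buffer_step_measurable[of \<Gamma>]
      by (simp add: measurable_cong_sets[OF sets_pair_measure_cong[OF s1 nu(2)] refl])
    from measurable_comp[OF this fm]
    show "(\<lambda>(e,x). f (buffer_step \<Gamma> e x)) \<in> borel_measurable (\<pi> \<Otimes>\<^sub>M \<nu>)"
      by (simp add: comp_def case_prod_beta')
  qed
  have Tb: "\<bar>\<integral>x. f (buffer_step \<Gamma> e x) \<partial>\<nu>\<bar> \<le> \<Gamma>\<^sup>2" for e
  proof -
    have "\<bar>\<integral>x. f (buffer_step \<Gamma> e x) \<partial>\<nu>\<bar> \<le> (\<integral>x. \<bar>f (buffer_step \<Gamma> e x)\<bar> \<partial>\<nu>)"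
      by (rule integral_abs_bound)
    also have "\<dots> \<le> (\<integral>x. \<Gamma>\<^sup>2 \<partial>\<nu>)"
      by (intro integral_mono intf Bochner_Integration.integrable_abs) (auto simp: fb)
    finally show ?thesis by (simp add: N.prob_space)
  qed
  have intT: "integrable \<pi> (\<lambda>e. \<integral>x. f (buffer_step \<Gamma> e x) \<partial>\<nu>)"
    by (rule P.integrable_const_bound[where B="\<Gamma>\<^sup>2"]) (use Tb Tm in auto)
  have fmp: "f \<in> borel_measurable \<pi>" and cmp: "c \<in> borel_measurable \<pi>"
    by (simp_all add: measurable_cong_sets[OF s1 refl])
  have intf2: "integrable \<pi> f" by (rule P.integrable_const_bound[where B="\<Gamma>\<^sup>2"]) (use fb fmp in auto)
  have intc: "integrable \<pi> c"
    by (rule P.integrable_const_bound[where B="\<Gamma>"]) (use cr cmp G in auto)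
  have "(\<integral>e. f e \<partial>\<pi>) \<le> (\<integral>e. f e - 2 * \<epsilon> * (\<Gamma> - c e) + ?m2 \<partial>\<pi>)"
    unfolding stf
  proof (rule integral_mono_AE[OF intT])
    show "integrable \<pi> (\<lambda>e. f e - 2 * \<epsilon> * (\<Gamma> - c e) + ?m2)"
      using intf2 intc by simp
    show "AE e in \<pi>. (\<integral>x. f (buffer_step \<Gamma> e x) \<partial>\<nu>) \<le> f e - 2 * \<epsilon> * (\<Gamma> - c e) + ?m2"
      using supp bound by auto
  qed
  also have "\<dots> = (\<integral>e. f e \<partial>\<pi>) - 2 * \<epsilon> * (\<integral>e. \<Gamma> - c e \<partial>\<pi>) + ?m2"
    using intf2 intc by (simp add: P.prob_space)
  finally show ?thesis unfolding c_def by (simp add: algebra_simps)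
qed

lemma part3_limit:
  assumes nu: "prob_space \<nu>" "sets \<nu> = sets borel"
    and int2: "integrable \<nu> (\<lambda>x. x\<^sup>2)" and mean: "(\<integral>x. x \<partial>\<nu>) = \<epsilon>" and eps: "0 < \<epsilon>"
    and st: "\<forall>\<Gamma>>0. stationary_buffer \<nu> \<Gamma> (\<pi> \<Gamma>)" and x: "0 \<le> x"
  shows "((\<lambda>\<Gamma>. measure (\<pi> \<Gamma>) {e. e \<ge> x}) \<longlongrightarrow> 1) at_top"
proof -
  define C where "C = (\<integral>x. x\<^sup>2 \<partial>\<nu>) / (2 * \<epsilon>)"
  have lower: "1 - C / (\<Gamma> - x) \<le> measure (\<pi> \<Gamma>) {e. e \<ge> x}" and upper: "measure (\<pi> \<Gamma>) {e. e \<ge> x} \<le> 1"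
    if G: "x + 1 \<le> \<Gamma>" for \<Gamma>
  proof -
    have G0: "0 < \<Gamma>" using G x by auto
    have stG: "stationary_buffer \<nu> \<Gamma> (\<pi> \<Gamma>)" using st G0 by auto
    interpret P: prob_space "\<pi> \<Gamma>" using stat_facts[OF stG nu] G0 by auto
    have s1: "sets (\<pi> \<Gamma>) = sets borel" using stat_facts[OF stG nu] G0 by auto
    show "measure (\<pi> \<Gamma>) {e. e \<ge> x} \<le> 1" by (rule P.prob_le_1)
    have A: "(\<integral>e. \<Gamma> - min \<Gamma> (max 0 e) \<partial>\<pi> \<Gamma>) \<le> C"
      using part3_abstract[OF nu int2 mean stG G0] eps unfolding C_def by (simp add: field_simps)
    have cmp: "(\<lambda>e. \<Gamma> - min \<Gamma> (max 0 e)) \<in> borel_measurable (\<pi> \<Gamma>)"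
      by (simp add: measurable_cong_sets[OF s1 refl])
    have intc: "integrable (\<pi> \<Gamma>) (\<lambda>e. \<Gamma> - min \<Gamma> (max 0 e))"
      by (rule P.integrable_const_bound[where B="\<Gamma>"]) (use cmp G0 in auto)
    have ev: "{e. e < x} \<in> sets (\<pi> \<Gamma>)" using s1 by simp
    have "(\<Gamma> - x) * measure (\<pi> \<Gamma>) {e. e < x} = (\<integral>e. (\<Gamma> - x) * indicator {e. e < x} e \<partial>\<pi> \<Gamma>)"
      using ev by simp
    also have "\<dots> \<le> (\<integral>e. \<Gamma> - min \<Gamma> (max 0 e) \<partial>\<pi> \<Gamma>)"
    proof (rule integral_mono[OF _ intc])
      show "integrable (\<pi> \<Gamma>) (\<lambda>e. (\<Gamma> - x) * indicator {e. e < x} e)"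
        using ev by (intro integrable_mult_right integrable_real_indicator) (auto simp: P.emeasure_eq_measure)
      fix e show "(\<Gamma> - x) * indicator {e. e < x} e \<le> \<Gamma> - min \<Gamma> (max 0 e)"
        using G x by (auto simp: indicator_def)
    qed
    also have "\<dots> \<le> C" by (rule A)
    finally have B: "measure (\<pi> \<Gamma>) {e. e < x} \<le> C / (\<Gamma> - x)"
      using G by (simp add: field_simps)
    have "{e. e \<ge> x} = space (\<pi> \<Gamma>) - {e. e < x}" using sets_eq_imp_space_eq[OF s1] by auto
    then have "measure (\<pi> \<Gamma>) {e. e \<ge> x} = 1 - measure (\<pi> \<Gamma>) {e. e < x}"
      using P.prob_compl[OF ev] by simp
    then show "1 - C / (\<Gamma> - x) \<le> measure (\<pi> \<Gamma>) {e. e \<ge> x}" using B by simp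
  qed
  have fl: "filterlim (\<lambda>\<Gamma>::real. \<Gamma> - x) at_top at_top"
    unfolding filterlim_at_top
  proof
    fix Z :: real show "\<forall>\<^sub>F \<Gamma> in at_top. Z \<le> \<Gamma> - x"
      by (intro eventually_at_top_linorderI[of "Z + x"]) auto
  qed
  have "((\<lambda>\<Gamma>. C / (\<Gamma> - x)) \<longlongrightarrow> 0) at_top"
    by (rule tendsto_divide_0[OF tendsto_const filterlim_at_top_imp_at_infinity[OF fl]])
  then have lim: "((\<lambda>\<Gamma>. 1 - C / (\<Gamma> - x)) \<longlongrightarrow> 1) at_top"
    using tendsto_diff[OF tendsto_const[of 1]] by fastforce
  show ?thesis
  proof (rule tendsto_sandwich[OF _ _ lim tendsto_const])
    show "\<forall>\<^sub>F \<Gamma> in at_top. 1 - C / (\<Gamma> - x) \<le> measure (\<pi> \<Gamma>) {e. x \<le> e}"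
      using lower by (intro eventually_at_top_linorderI[of "x+1"]) auto
    show "\<forall>\<^sub>F \<Gamma> in at_top. measure (\<pi> \<Gamma>) {e. x \<le> e} \<le> 1"
      using upper by (intro eventually_at_top_linorderI[of "x+1"]) auto
  qed
qed

lemma part4_abstract:
  fixes \<pi> :: "real \<Rightarrow> real measure" and \<mu>Y \<mu>X :: "real measure"
  assumes lim: "\<forall>x\<ge>0. ((\<lambda>\<Gamma>. measure (\<pi> \<Gamma>) {e. e \<ge> x}) \<longlongrightarrow> 1) at_top"
    and pis: "\<forall>\<Gamma>>0. prob_space (\<pi> \<Gamma>) \<and> sets (\<pi> \<Gamma>) = sets borel"
    and Y: "prob_space \<mu>Y" "sets \<mu>Y = sets borel" "AE y in \<mu>Y. 0 \<le> y"
    and X: "prob_space \<mu>X" "sets \<mu>X = sets borel"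
  shows "((\<lambda>\<Gamma>. measure (\<pi> \<Gamma> \<Otimes>\<^sub>M (\<mu>Y \<Otimes>\<^sub>M \<mu>X)) {(e, y, x). sqrt (e + y) \<ge> \<bar>x\<bar>}) \<longlongrightarrow> 1) at_top"
proof -
  interpret PY: prob_space \<mu>Y by fact
  interpret PX: prob_space \<mu>X by fact
  interpret PYX: pair_prob_space \<mu>Y \<mu>X ..
  let ?S = "{(e, y, x). sqrt (e + y) \<ge> \<bar>x\<bar>} :: (real \<times> real \<times> real) set"
  have Sb: "?S \<in> sets (borel \<Otimes>\<^sub>M (borel \<Otimes>\<^sub>M borel))"
  proof -
    have "{w \<in> space (borel \<Otimes>\<^sub>M (borel \<Otimes>\<^sub>M borel)). \<bar>snd (snd w)\<bar> \<le> sqrt (fst w + fst (snd w))}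
          \<in> sets (borel \<Otimes>\<^sub>M (borel \<Otimes>\<^sub>M borel))" by measurable
    moreover have "{w \<in> space (borel \<Otimes>\<^sub>M (borel \<Otimes>\<^sub>M borel)). \<bar>snd (snd w)\<bar> \<le> sqrt (fst w + fst (snd w))} = ?S"
      by (auto simp: space_pair_measure)
    ultimately show ?thesis by simp
  qed
  have pY: "measure \<mu>Y {y. 0 \<le> y} = 1"
  proof -
    have "{y \<in> space \<mu>Y. 0 \<le> y} \<in> sets \<mu>Y" using Y(2) by (simp add: sets_eq_imp_space_eq[OF Y(2)])
    then have "measure \<mu>Y {y \<in> space \<mu>Y. 0 \<le> y} = 1" using PY.prob_Collect_eq_1 Y(3) by blast
    then show ?thesis by (simp add: sets_eq_imp_space_eq[OF Y(2)])
  qed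
  have Xlim: "(\<lambda>n::nat. measure \<mu>X {x. \<bar>x\<bar> \<le> real n}) \<longlonglongrightarrow> 1"
  proof -
    have "(\<lambda>n::nat. measure \<mu>X {x. \<bar>x\<bar> \<le> real n}) \<longlonglongrightarrow> measure \<mu>X (\<Union>n. {x. \<bar>x\<bar> \<le> real n})"
    proof (rule PX.finite_Lim_measure_incseq)
      have "{x::real. \<bar>x\<bar> \<le> real n} = {- real n..real n}" for n by auto
      then show "range (\<lambda>n::nat. {x::real. \<bar>x\<bar> \<le> real n}) \<subseteq> sets \<mu>X"
        unfolding X(2) by (simp add: image_subset_iff)
      show "incseq (\<lambda>n::nat. {x::real. \<bar>x\<bar> \<le> real n})"
        by (rule monoI) (auto intro: order_trans)
    qed
    moreover have "(\<Union>n. {x::real. \<bar>x\<bar> \<le> real n}) = space \<mu>X"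
      by (auto simp: sets_eq_imp_space_eq[OF X(2)] intro: real_nat_ceiling_ge)
    ultimately show ?thesis by (simp add: PX.prob_space)
  qed
  show ?thesis
    unfolding tendsto_iff
  proof (intro allI impI)
    fix \<delta> :: real assume d: "0 < \<delta>"
    define d2 where "d2 = min (\<delta>/2) (1/2)"
    have d2: "0 < d2" "d2 \<le> \<delta>/2" "d2 \<le> 1/2" using d by (auto simp: d2_def)
    from Xlim d2(1) obtain n :: nat where n: "dist (measure \<mu>X {x. \<bar>x\<bar> \<le> real n}) 1 < d2"
      unfolding tendsto_iff by (meson eventually_sequentially order.refl)
    have n': "1 - d2 < measure \<mu>X {x. \<bar>x\<bar> \<le> real n}" using n by (auto simp: dist_real_def)
    have "\<forall>\<^sub>F \<Gamma> in at_top. dist (measure (\<pi> \<Gamma>) {e. e \<ge> (real n)\<^sup>2}) 1 < d2"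
      using lim d2(1) unfolding tendsto_iff by auto
    moreover have "\<forall>\<^sub>F \<Gamma> in at_top. (0::real) < \<Gamma>" by (rule eventually_gt_at_top)
    ultimately show "\<forall>\<^sub>F \<Gamma> in at_top.
        dist (measure (\<pi> \<Gamma> \<Otimes>\<^sub>M (\<mu>Y \<Otimes>\<^sub>M \<mu>X)) ?S) 1 < \<delta>"
    proof eventually_elim
      case (elim \<Gamma>)
      interpret P: prob_space "\<pi> \<Gamma>" using pis elim(2) by auto
      have sP: "sets (\<pi> \<Gamma>) = sets borel" using pis elim(2) by auto
      interpret PP: pair_prob_space "\<pi> \<Gamma>" "\<mu>Y \<Otimes>\<^sub>M \<mu>X" ..
      have qps: "prob_space (\<pi> \<Gamma> \<Otimes>\<^sub>M (\<mu>Y \<Otimes>\<^sub>M \<mu>X))" by (rule PP.prob_space_axioms)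
      have sfYX: "sigma_finite_measure (\<mu>Y \<Otimes>\<^sub>M \<mu>X)"
        by (rule prob_space_imp_sigma_finite[OF PYX.prob_space_axioms])
      have sfX: "sigma_finite_measure \<mu>X" by (rule prob_space_imp_sigma_finite[OF X(1)])
      have sQ: "sets (\<pi> \<Gamma> \<Otimes>\<^sub>M (\<mu>Y \<Otimes>\<^sub>M \<mu>X)) = sets (borel \<Otimes>\<^sub>M (borel \<Otimes>\<^sub>M borel))"
        by (intro sets_pair_measure_cong sP Y(2) X(2))
      have e1: "1 - d2 < measure (\<pi> \<Gamma>) {e. e \<ge> (real n)\<^sup>2}" using elim(1) by (auto simp: dist_real_def)
      let ?A = "{e. e \<ge> (real n)\<^sup>2} \<times> ({y. 0 \<le> y} \<times> {x. \<bar>x\<bar> \<le> real n})"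
      have As: "?A \<subseteq> ?S"
      proof safe
        fix e y x :: real assume "(real n)\<^sup>2 \<le> e" "0 \<le> y" "\<bar>x\<bar> \<le> real n"
        then have "sqrt ((real n)\<^sup>2) \<le> sqrt (e + y)" by (intro real_sqrt_le_mono) auto
        then show "\<bar>x\<bar> \<le> sqrt (e + y)" using \<open>\<bar>x\<bar> \<le> real n\<close> by simp
      qed
      have mA: "measure (\<pi> \<Gamma> \<Otimes>\<^sub>M (\<mu>Y \<Otimes>\<^sub>M \<mu>X)) ?A
          = measure (\<pi> \<Gamma>) {e. e \<ge> (real n)\<^sup>2} * (measure \<mu>Y {y. 0 \<le> y} * measure \<mu>X {x. \<bar>x\<bar> \<le> real n})"
      proof -
        have sets: "{e::real. e \<ge> (real n)\<^sup>2} \<in> sets (\<pi> \<Gamma>)" "{y::real. 0 \<le> y} \<in> sets \<mu>Y"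
          "{x::real. \<bar>x\<bar> \<le> real n} \<in> sets \<mu>X" using sP Y(2) X(2) by auto
        have "emeasure (\<pi> \<Gamma> \<Otimes>\<^sub>M (\<mu>Y \<Otimes>\<^sub>M \<mu>X)) ?A
           = emeasure (\<pi> \<Gamma>) {e. e \<ge> (real n)\<^sup>2} * (emeasure \<mu>Y {y. 0 \<le> y} * emeasure \<mu>X {x. \<bar>x\<bar> \<le> real n})"
          using sets by (simp add: sigma_finite_measure.emeasure_pair_measure_Times[OF sfYX] sigma_finite_measure.emeasure_pair_measure_Times[OF sfX])
        also have "\<dots> = ennreal (measure (\<pi> \<Gamma>) {e. e \<ge> (real n)\<^sup>2} * (measure \<mu>Y {y. 0 \<le> y} * measure \<mu>X {x. \<bar>x\<bar> \<le> real n}))"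
          by (simp add: P.emeasure_eq_measure PY.emeasure_eq_measure PX.emeasure_eq_measure ennreal_mult)
        finally show ?thesis by (simp add: measure_def)
      qed
      have "(1 - d2) * (1 - d2) \<le> measure (\<pi> \<Gamma> \<Otimes>\<^sub>M (\<mu>Y \<Otimes>\<^sub>M \<mu>X)) ?A"
        unfolding mA pY using e1 n' d2 by (intro mult_mono) auto
      also have "\<dots> \<le> measure (\<pi> \<Gamma> \<Otimes>\<^sub>M (\<mu>Y \<Otimes>\<^sub>M \<mu>X)) ?S"
        by (rule finite_measure.finite_measure_mono[OF prob_space.axioms(1)[OF qps] As]) (use Sb sQ in simp)
      finally have lo: "(1 - d2) * (1 - d2) \<le> measure (\<pi> \<Gamma> \<Otimes>\<^sub>M (\<mu>Y \<Otimes>\<^sub>M \<mu>X)) ?S" .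
      have up: "measure (\<pi> \<Gamma> \<Otimes>\<^sub>M (\<mu>Y \<Otimes>\<^sub>M \<mu>X)) ?S \<le> 1" by (rule prob_space.prob_le_1[OF qps])
      have "(1 - d2) * (1 - d2) = 1 - 2 * d2 + d2 * d2" by (simp add: algebra_simps)
      moreover have "0 < d2 * d2" using d2(1) by simp
      ultimately have "1 - \<delta> < (1 - d2) * (1 - d2)" using d2(2) by linarith
      then show ?case using lo up by (auto simp: dist_real_def)
    qed
  qed
qed


theorem mainTheorem4:
  fixes M :: "'a measure"
    and Y X' :: "nat \<Rightarrow> 'a \<Rightarrow> real"
    and \<epsilon> :: real
    and \<pi> :: "real \<Rightarrow> real measure"
  assumes "prob_space M"
    and indep: "prob_space.indep_vars M (\<lambda>_. borel)
                  (\<lambda>i. case i of Inl k \<Rightarrow> Y k | Inr k \<Rightarrow> X' k) (UNIV :: (nat + nat) set)"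
    and Y_id: "\<forall>k. distr M borel (Y k) = distr M borel (Y 0)"
    and Y_nonneg: "\<forall>k. AE \<omega> in M. Y k \<omega> \<ge> 0"
    and Y_sq: "integrable M (\<lambda>\<omega>. (Y 0 \<omega>)\<^sup>2)"
    and eps: "0 < \<epsilon>" "\<epsilon> < prob_space.expectation M (Y 0)"
    and X'_normal: "\<forall>k. distributed M lborel (X' k)
                  (\<lambda>x. ennreal (normal_density 0 (sqrt (prob_space.expectation M (Y 0) - \<epsilon>)) x))"
    and \<pi>_stat: "\<forall>\<Gamma>>0. stationary_buffer
                  (distr M borel (\<lambda>\<omega>. Y 1 \<omega> - (X' 1 \<omega>)\<^sup>2)) \<Gamma> (\<pi> \<Gamma>)"
  shows "(\<forall>\<Gamma>>0. st_le (\<pi> \<Gamma>) (\<pi> (\<Gamma> + 1)))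
       \<and> (\<forall>\<Gamma>>0. \<forall>k. st_le
             (distr M borel (buffer_chain \<Gamma> (\<lambda>k \<omega>. Y k \<omega> - (X' k \<omega>)\<^sup>2) k))
             (distr M borel (buffer_chain (\<Gamma> + 1) (\<lambda>k \<omega>. Y k \<omega> - (X' k \<omega>)\<^sup>2) k)))
       \<and> (\<forall>x\<ge>0. ((\<lambda>\<Gamma>. measure (\<pi> \<Gamma>) {e. e \<ge> x}) \<longlongrightarrow> 1) at_top)
       \<and> ((\<lambda>\<Gamma>. measure (\<pi> \<Gamma> \<Otimes>\<^sub>M (distr M borel (Y 1) \<Otimes>\<^sub>M distr M borel (X' 1)))
                {(e, y, x). sqrt (e + y) \<ge> \<bar>x\<bar>}) \<longlongrightarrow> 1) at_top"
proof -
  interpret P: prob_space M by fact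
  have rv: "(case i of Inl k \<Rightarrow> Y k | Inr k \<Rightarrow> X' k) \<in> borel_measurable M" for i
    using indep unfolding P.indep_vars_def2 by blast
  have Ym[measurable]: "Y k \<in> borel_measurable M" for k using rv[of "Inl k"] by simp
  have Xm[measurable]: "X' k \<in> borel_measurable M" for k using rv[of "Inr k"] by simp
  define \<eta> where "\<eta> = (\<lambda>\<omega>. Y 1 \<omega> - (X' 1 \<omega>)\<^sup>2)"
  define \<nu> where "\<nu> = distr M borel \<eta>"
  have \<eta>m[measurable]: "\<eta> \<in> borel_measurable M" unfolding \<eta>_def by measurable
  have nu: "prob_space \<nu>" "sets \<nu> = sets borel" unfolding \<nu>_def by (auto intro: P.prob_space_distr)
  define \<mu> where "\<mu> = P.expectation (Y 0)"
  define \<sigma> where "\<sigma> = sqrt (\<mu> - \<epsilon>)"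
  have \<sigma>: "0 < \<sigma>" using eps unfolding \<sigma>_def \<mu>_def by simp
  have \<sigma>2: "\<sigma>\<^sup>2 = \<mu> - \<epsilon>" using eps unfolding \<sigma>_def \<mu>_def by simp
  have Xd: "distributed M lborel (X' 1) (normal_density 0 \<sigma>)" using X'_normal unfolding \<sigma>_def \<mu>_def by simp
  have EX: "P.expectation (X' 1) = 0" by (rule P.normal_distributed_expectation[OF \<sigma> Xd])
  have VX: "P.variance (X' 1) = \<sigma>\<^sup>2" by (rule P.normal_distributed_variance[OF \<sigma> Xd])
  have EX2: "P.expectation (\<lambda>\<omega>. (X' 1 \<omega>)\<^sup>2) = \<mu> - \<epsilon>" using VX EX \<sigma>2 by simp
  have intX4: "integrable M (\<lambda>\<omega>. (X' 1 \<omega>) ^ 4)"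
  proof -
    have "integrable lborel (\<lambda>x. normal_density 0 \<sigma> x * x ^ 4)"
      using integrable_normal_moment[where \<sigma>=\<sigma> and \<mu>=0 and k=4] \<sigma> by simp
    then show ?thesis using distributed_integrable[OF Xd, of "\<lambda>x. x ^ 4"] by simp
  qed
  have intX2: "integrable M (\<lambda>\<omega>. (X' 1 \<omega>)\<^sup>2)"
  proof -
    have "integrable lborel (\<lambda>x. normal_density 0 \<sigma> x * x ^ 2)"
      using integrable_normal_moment[where \<sigma>=\<sigma> and \<mu>=0 and k=2] \<sigma> by simp
    then show ?thesis using distributed_integrable[OF Xd, of "\<lambda>x. x ^ 2"] by simp
  qed
  have intY2: "integrable M (\<lambda>\<omega>. (Y 1 \<omega>)\<^sup>2)"
  proof -
    have "integrable (distr M borel (Y 0)) (\<lambda>y. y\<^sup>2)" using Y_sq by (subst integrable_distr_eq) auto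
    then have "integrable (distr M borel (Y 1)) (\<lambda>y. y\<^sup>2)" using Y_id by metis
    then show ?thesis by (subst (asm) integrable_distr_eq) auto
  qed
  have intY1: "integrable M (Y 1)" by (rule P.square_integrable_imp_integrable[OF Ym intY2])
  have EY1: "P.expectation (Y 1) = \<mu>"
  proof -
    have "P.expectation (Y 1) = (\<integral>y. y \<partial>distr M borel (Y 1))" by (simp add: integral_distr)
    also have "\<dots> = (\<integral>y. y \<partial>distr M borel (Y 0))" using Y_id by metis
    also have "\<dots> = \<mu>" by (simp add: integral_distr \<mu>_def)
    finally show ?thesis .
  qed
  have int\<eta>2: "integrable M (\<lambda>\<omega>. (\<eta> \<omega>)\<^sup>2)"
  proof (rule Bochner_Integration.integrable_bound[where f="\<lambda>\<omega>. 2 * (Y 1 \<omega>)\<^sup>2 + 2 * (X' 1 \<omega>) ^ 4"])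
    show "integrable M (\<lambda>\<omega>. 2 * (Y 1 \<omega>)\<^sup>2 + 2 * (X' 1 \<omega>) ^ 4)" using intY2 intX4 by simp
    show "(\<lambda>\<omega>. (\<eta> \<omega>)\<^sup>2) \<in> borel_measurable M" by measurable
    show "AE \<omega> in M. norm ((\<eta> \<omega>)\<^sup>2) \<le> norm (2 * (Y 1 \<omega>)\<^sup>2 + 2 * (X' 1 \<omega>) ^ 4)"
    proof (rule AE_I2)
      fix \<omega>
      have e4: "(X' 1 \<omega>) ^ 4 = ((X' 1 \<omega>)\<^sup>2)\<^sup>2" by (simp add: power_mult[symmetric])
      have "(\<eta> \<omega>)\<^sup>2 = 2 * (Y 1 \<omega>)\<^sup>2 + 2 * ((X' 1 \<omega>)\<^sup>2)\<^sup>2 - (Y 1 \<omega> + (X' 1 \<omega>)\<^sup>2)\<^sup>2"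
        unfolding \<eta>_def by (simp add: power2_eq_square algebra_simps)
      moreover have "0 \<le> (Y 1 \<omega> + (X' 1 \<omega>)\<^sup>2)\<^sup>2" by simp
      ultimately have "(\<eta> \<omega>)\<^sup>2 \<le> 2 * (Y 1 \<omega>)\<^sup>2 + 2 * (X' 1 \<omega>) ^ 4" using e4 by linarith
      then show "norm ((\<eta> \<omega>)\<^sup>2) \<le> norm (2 * (Y 1 \<omega>)\<^sup>2 + 2 * (X' 1 \<omega>) ^ 4)"
        by (simp add: abs_of_nonneg)
    qed
  qed
  have int2: "integrable \<nu> (\<lambda>x. x\<^sup>2)" unfolding \<nu>_def using int\<eta>2 by (subst integrable_distr_eq) auto
  have mean: "(\<integral>x. x \<partial>\<nu>) = \<epsilon>"
  proof -
    have "(\<integral>x. x \<partial>\<nu>) = P.expectation \<eta>" unfolding \<nu>_def by (simp add: integral_distr)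
    also have "\<dots> = P.expectation (Y 1) - P.expectation (\<lambda>\<omega>. (X' 1 \<omega>)\<^sup>2)"
      unfolding \<eta>_def using intY1 intX2 by simp
    also have "\<dots> = \<epsilon>" using EY1 EX2 by simp
    finally show ?thesis .
  qed
  have stat: "\<forall>\<Gamma>>0. stationary_buffer \<nu> \<Gamma> (\<pi> \<Gamma>)" using \<pi>_stat unfolding \<nu>_def \<eta>_def by simp
  have ind: "P.indep_sets (\<lambda>i. {(case i of Inl k \<Rightarrow> Y k | Inr k \<Rightarrow> X' k) -` A \<inter> space M | A. A \<in> sets borel}) UNIV"
    using indep unfolding P.indep_vars_def2 by auto
  have ppos: "0 < measure \<nu> {x. x \<le> -\<Gamma>}" if G: "0 < \<Gamma>" for \<Gamma>
  proof -
    define c where "c = 2 * \<bar>\<mu>\<bar> + 1"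
    have c: "0 < c" unfolding c_def by simp
    define A where "A = Y 1 -` {..<c} \<inter> space M"
    define s where "s = sqrt (c + \<Gamma>)"
    define B where "B = X' 1 -` {s..} \<inter> space M"
    have Aev: "A \<in> P.events" and Bev: "B \<in> P.events" unfolding A_def B_def by auto
    have "P.prob {\<omega> \<in> space M. Y 1 \<omega> \<ge> c} \<le> P.expectation (Y 1) / c"
      by (rule integral_Markov_inequality_measure[OF intY1 _ _ c, of "space M"]) (use Y_nonneg in auto)
    also have "\<dots> < 1" using c EY1 unfolding c_def by (simp add: field_simps)
    finally have lt1: "P.prob {\<omega> \<in> space M. Y 1 \<omega> \<ge> c} < 1" .
    have "A = space M - {\<omega> \<in> space M. Y 1 \<omega> \<ge> c}" unfolding A_def by auto
    then have pA: "0 < P.prob A" using P.prob_compl[of "{\<omega> \<in> space M. Y 1 \<omega> \<ge> c}"] lt1 by simp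
    have eB: "emeasure M B = (\<integral>\<^sup>+x. ennreal (normal_density 0 \<sigma> x) * indicator {s..} x \<partial>lborel)"
      unfolding B_def by (rule distributed_emeasure[OF Xd]) simp
    have nz: "(\<integral>\<^sup>+x. ennreal (normal_density 0 \<sigma> x) * indicator {s..} x \<partial>lborel) \<noteq> 0"
    proof
      assume "(\<integral>\<^sup>+x. ennreal (normal_density 0 \<sigma> x) * indicator {s..} x \<partial>lborel) = 0"
      then have "AE x in lborel. ennreal (normal_density 0 \<sigma> x) * indicator {s..} x = 0"
        by (subst (asm) nn_integral_0_iff_AE) auto
      then have "AE x in lborel. x < s"
      proof eventually_elim
        case (elim x)
        have "0 < normal_density 0 \<sigma> x" by (rule normal_density_pos[OF \<sigma>])
        then show ?case using elim by (auto simp: indicator_def split: if_splits)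
      qed
      then have "emeasure lborel {x. \<not> x < s} = 0"
        by (subst (asm) AE_iff_measurable[of "{x. \<not> x < s}"]) auto
      moreover have "emeasure lborel {s..s+1} \<le> emeasure lborel {x. \<not> x < s}"
        by (rule emeasure_mono) auto
      ultimately show False by simp
    qed
    have "P.prob B \<noteq> 0" using eB nz P.emeasure_eq_measure[of B] by (metis ennreal_0)
    then have pB: "0 < P.prob B" using measure_nonneg[of M B] by (simp add: order_less_le)
    define F where "F j = (if j = Inl 1 then A else B)" for j :: "nat + nat"
    have AF: "A \<in> {Y 1 -` S \<inter> space M | S. S \<in> sets borel}"
      unfolding A_def by (rule CollectI, rule exI[of _ "{..<c}"]) simp
    have BF: "B \<in> {X' 1 -` S \<inter> space M | S. S \<in> sets borel}"
      unfolding B_def by (rule CollectI, rule exI[of _ "{s..}"]) simp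
    have "P.prob (\<Inter>j\<in>{Inl 1, Inr 1}. F j) = (\<Prod>j\<in>{Inl 1, Inr 1}. P.prob (F j))"
      by (rule P.indep_setsD[OF ind]) (use AF BF in \<open>auto simp: F_def\<close>)
    then have pAB: "P.prob (A \<inter> B) = P.prob A * P.prob B" by (simp add: F_def Int_commute)
    have sub: "A \<inter> B \<subseteq> \<eta> -` {x. x \<le> -\<Gamma>} \<inter> space M"
    proof
      fix \<omega> assume "\<omega> \<in> A \<inter> B"
      then have y: "Y 1 \<omega> < c" and x: "s \<le> X' 1 \<omega>" and sp: "\<omega> \<in> space M" unfolding A_def B_def by auto
      have s0: "0 \<le> s" unfolding s_def using c G by simp
      have "s\<^sup>2 \<le> (X' 1 \<omega>)\<^sup>2" by (rule power_mono[OF x s0])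
      moreover have "s\<^sup>2 = c + \<Gamma>" unfolding s_def using c G by simp
      ultimately show "\<omega> \<in> \<eta> -` {x. x \<le> -\<Gamma>} \<inter> space M" using y sp unfolding \<eta>_def by auto
    qed
    have "P.prob (A \<inter> B) \<le> P.prob (\<eta> -` {x. x \<le> -\<Gamma>} \<inter> space M)"
      by (rule P.finite_measure_mono[OF sub]) simp
    also have "\<dots> = measure \<nu> {x. x \<le> -\<Gamma>}" unfolding \<nu>_def by (simp add: measure_distr)
    finally show ?thesis using pAB pA pB by (metis mult_pos_pos order_less_le_trans)
  qed
  define H where "H = (\<lambda>k \<omega>. Y k \<omega> - (X' k \<omega>)\<^sup>2)"
  have chain_m[measurable]: "buffer_chain \<Gamma> H k \<in> borel_measurable M" for \<Gamma> k
  proof (induction k)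
    case (Suc k)
    have Hm: "H j \<in> borel_measurable M" for j unfolding H_def by measurable
    have "(\<lambda>\<omega>. min \<Gamma> (max 0 (buffer_chain \<Gamma> H k \<omega> + H (Suc k) \<omega>))) \<in> borel_measurable M"
      by (intro borel_measurable_min borel_measurable_max borel_measurable_add borel_measurable_const Suc Hm)
    then have "(\<lambda>\<omega>. buffer_step \<Gamma> (buffer_chain \<Gamma> H k \<omega>) (H (Suc k) \<omega>)) \<in> borel_measurable M"
      unfolding buffer_step_def .
    moreover have "buffer_chain \<Gamma> H (Suc k) = (\<lambda>\<omega>. buffer_step \<Gamma> (buffer_chain \<Gamma> H k \<omega>) (H (Suc k) \<omega>))"
      by (rule ext) simp
    ultimately show ?case by simp
  qed simp
  have chain_mono: "buffer_chain \<Gamma> H k \<omega> \<le> buffer_chain \<Gamma>' H k \<omega>" if "\<Gamma> \<le> \<Gamma>'" for \<Gamma> \<Gamma>' k \<omega>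
    by (induction k) (simp_all add: buffer_step_mono that)
  have part1a: "\<forall>\<Gamma>>0. st_le (\<pi> \<Gamma>) (\<pi> (\<Gamma> + 1))"
  proof (intro allI impI)
    fix \<Gamma> :: real assume G: "0 < \<Gamma>"
    show "st_le (\<pi> \<Gamma>) (\<pi> (\<Gamma> + 1))"
      by (rule part1_abstract[OF nu ppos[OF G] G]) (use stat G in auto)
  qed
  have part1b: "\<forall>\<Gamma>>0. \<forall>k. st_le (distr M borel (buffer_chain \<Gamma> H k)) (distr M borel (buffer_chain (\<Gamma> + 1) H k))"
  proof (intro allI impI)
    fix \<Gamma> :: real and k assume G: "0 < \<Gamma>"
    show "st_le (distr M borel (buffer_chain \<Gamma> H k)) (distr M borel (buffer_chain (\<Gamma> + 1) H k))"
      unfolding st_le_def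
    proof
      fix x :: real
      have "P.prob (buffer_chain \<Gamma> H k -` {y. y > x} \<inter> space M)
          \<le> P.prob (buffer_chain (\<Gamma> + 1) H k -` {y. y > x} \<inter> space M)"
        by (rule P.finite_measure_mono) (use chain_mono[of \<Gamma> "\<Gamma>+1" k] in \<open>auto intro: less_le_trans\<close>)
      then show "measure (distr M borel (buffer_chain \<Gamma> H k)) {y. y > x}
          \<le> measure (distr M borel (buffer_chain (\<Gamma> + 1) H k)) {y. y > x}"
        by (simp add: measure_distr)
    qed
  qed
  have part2: "\<forall>x\<ge>0. ((\<lambda>\<Gamma>. measure (\<pi> \<Gamma>) {e. e \<ge> x}) \<longlongrightarrow> 1) at_top"
    using part3_limit[OF nu int2 mean eps(1) stat] by blast
  have pis: "\<forall>\<Gamma>>0. prob_space (\<pi> \<Gamma>) \<and> sets (\<pi> \<Gamma>) = sets borel"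
    using stat stat_facts[OF _ nu] by (meson less_imp_le)
  have part3: "((\<lambda>\<Gamma>. measure (\<pi> \<Gamma> \<Otimes>\<^sub>M (distr M borel (Y 1) \<Otimes>\<^sub>M distr M borel (X' 1)))
                {(e, y, x). sqrt (e + y) \<ge> \<bar>x\<bar>}) \<longlongrightarrow> 1) at_top"
  proof (rule part4_abstract[OF part2 pis])
    show "prob_space (distr M borel (Y 1))" "prob_space (distr M borel (X' 1))"
      by (auto intro: P.prob_space_distr)
    show "AE y in distr M borel (Y 1). 0 \<le> y"
      using Y_nonneg by (subst AE_distr_iff) auto
  qed simp_all
  show ?thesis using part1a part1b part2 part3 unfolding H_def by blast
qed

end
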